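(* Let $x\in\mathbb X$, $B\Subset\mathbb X\setminus\{x\}$ and $Y\in\mathbf F(x)$ with $Y\cap B=\varnothing$. Then \[ \max\Big\{|W(Y\mid B)|,\ 1+|W(Y\mid B)-1|\alpha^S\ \Big|\ \varnothing\neq S\subset Y\setminus\{x\}\Big\} \le\prod_{\substack{X\in\mathbf F(x):\\ X\setminus B=Y}}\max\Big\{|W(X)|,\ 1+|W(X)-1|\alpha^S\ \Big|\ \varnothing\neq S\subset X\setminus(\{x\}\cup B)\Big\}. \]
   Context: $\mathbb X$ is a finite or countably infinite set; $X\Subset\mathbb X$ means finite subset; $\mathbf F$ is the set of finite subsets of $\mathbb X$ and $\mathbf F(x)=\{X\Subset\mathbb X\mid x\in X\}$. Fix $W:\mathbf F\to\mathbb C$, $r:\mathbb X\to[0,1)$, $\alpha=\frac r{1-r}$, and write $\alpha^S=\prod_{s\in S}\alpha(s)$. The conditional interaction is $W(X\mid B)=\prod_{C\subset B}W(X\cup C)$ if $X\cap B=\varnothing$, $W(X\mid B)=0$ if $X=\{y\}$ with $y\in B$, and $W(X\mid B)=1$ otherwise. A maximum $\max\{a,\ b_S\mid S\in\mathcal S\}$ denotes the maximum of $a$ together with all $b_S$, $S\in\mathcal S$ (it equals $a$ if $\mathcal S=\varnothing$). *)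

theory Defs
  imports Complex_Main "HOL-Library.Countable"
begin

definition alpha :: "('a \<Rightarrow> real) \<Rightarrow> 'a \<Rightarrow> real" where
  "alpha r s = r s / (1 - r s)"

definition alphaS :: "('a \<Rightarrow> real) \<Rightarrow> 'a set \<Rightarrow> real" where
  "alphaS r S = (\<Prod>s\<in>S. alpha r s)"

definition condW :: "('a set \<Rightarrow> complex) \<Rightarrow> 'a set \<Rightarrow> 'a set \<Rightarrow> complex" where
  "condW W X B =
     (if X \<inter> B = {} then (\<Prod>C\<in>Pow B. W (X \<union> C))
      else if (\<exists>y\<in>B. X = {y}) then 0 else 1)"

definition bigmax :: "real \<Rightarrow> ('b \<Rightarrow> real) \<Rightarrow> 'b set \<Rightarrow> real" where
  "bigmax a b SS = Max (insert a (b ` SS))"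

end

theory Submission
  imports Defs
begin

lemma prod_bound:
  fixes w :: "'b \<Rightarrow> complex" and m :: "'b \<Rightarrow> real"
  assumes "finite I" "a \<ge> 0"
    and "\<And>i. i \<in> I \<Longrightarrow> cmod (w i) \<le> m i"
    and "\<And>i. i \<in> I \<Longrightarrow> 1 + cmod (w i - 1) * a \<le> m i"
  shows "cmod (\<Prod>i\<in>I. w i) \<le> (\<Prod>i\<in>I. m i) \<and> 1 + cmod ((\<Prod>i\<in>I. w i) - 1) * a \<le> (\<Prod>i\<in>I. m i)"
  using assms(1,3,4)
proof (induction I rule: finite_induct)
  case empty
  then show ?case by simp
next
  case (insert j F)
  let ?P = "\<Prod>i\<in>F. w i" and ?Q = "\<Prod>i\<in>F. m i"
  have IH1: "cmod ?P \<le> ?Q" and IH2: "1 + cmod (?P - 1) * a \<le> ?Q"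
    using insert by auto
  have mj1: "cmod (w j) \<le> m j" and mj2: "1 + cmod (w j - 1) * a \<le> m j" using insert by auto
  have Q1: "?Q \<ge> 1" using IH2 assms(2) by (smt (verit) mult_nonneg_nonneg norm_ge_zero)
  have e1: "cmod (w j * ?P) \<le> m j * ?Q"
    by (simp add: norm_mult mult_mono IH1 mj1 order_trans[OF norm_ge_zero mj1])
  have tri: "cmod (w j * ?P - 1) \<le> cmod (?P - 1) + cmod (w j - 1) * cmod ?P"
  proof -
    have "w j * ?P - 1 = (?P - 1) + (w j - 1) * ?P" by (simp add: algebra_simps)
    then show ?thesis by (metis norm_mult norm_triangle_ineq)
  qed
  have "1 + cmod (w j * ?P - 1) * a \<le> 1 + cmod (?P - 1) * a + cmod (w j - 1) * a * cmod ?P"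
    using mult_right_mono[OF tri assms(2)] by (simp add: algebra_simps)
  also have "\<dots> \<le> ?Q + cmod (w j - 1) * a * ?Q"
    using IH2 mult_left_mono[OF IH1, of "cmod (w j - 1) * a"] assms(2) by simp
  also have "\<dots> = (1 + cmod (w j - 1) * a) * ?Q" by (simp add: algebra_simps)
  also have "\<dots> \<le> m j * ?Q" using mj2 Q1 by (simp add: mult_right_mono)
  finally show ?case using e1 insert(1,2) by simp
qed

lemma alphaS_nonneg:
  assumes "\<forall>s. 0 \<le> r s \<and> r s < 1"
  shows "alphaS r S \<ge> 0"
  unfolding alphaS_def alpha_def
  by (rule prod_nonneg) (use assms in \<open>auto intro: divide_nonneg_pos\<close>)

theorem lemma4p6:
  fixes W :: "'a::countable set \<Rightarrow> complex" and r :: "'a \<Rightarrow> real"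
    and x :: 'a and B Y :: "'a set"
  assumes r_range: "\<forall>s. 0 \<le> r s \<and> r s < 1"
    and B_fin: "finite B" and x_notin_B: "x \<notin> B"
    and Y_fin: "finite Y" and x_in_Y: "x \<in> Y" and YB: "Y \<inter> B = {}"
  shows "bigmax (cmod (condW W Y B))
            (\<lambda>S. 1 + cmod (condW W Y B - 1) * alphaS r S)
            {S. S \<noteq> {} \<and> S \<subseteq> Y - {x}}
         \<le> (\<Prod>X\<in>{X. finite X \<and> x \<in> X \<and> X - B = Y}.
              bigmax (cmod (W X))
                (\<lambda>S. 1 + cmod (W X - 1) * alphaS r S)
                {S. S \<noteq> {} \<and> S \<subseteq> X - ({x} \<union> B)})"
proof -
  define SS where "SS = {S. S \<noteq> {} \<and> S \<subseteq> Y - {x}}"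
  have SSfin: "finite SS" unfolding SS_def
    by (rule finite_subset[of _ "Pow (Y - {x})"]) (use Y_fin in auto)
  define M where "M C = bigmax (cmod (W (Y \<union> C))) (\<lambda>S. 1 + cmod (W (Y \<union> C) - 1) * alphaS r S) SS" for C
  have img: "(\<lambda>C. Y \<union> C) ` Pow B = {X. finite X \<and> x \<in> X \<and> X - B = Y}"
  proof
    show "(\<lambda>C. Y \<union> C) ` Pow B \<subseteq> {X. finite X \<and> x \<in> X \<and> X - B = Y}"
      using Y_fin B_fin x_in_Y YB by (auto intro: finite_subset)
    show "{X. finite X \<and> x \<in> X \<and> X - B = Y} \<subseteq> (\<lambda>C. Y \<union> C) ` Pow B"
    proof
      fix X assume "X \<in> {X. finite X \<and> x \<in> X \<and> X - B = Y}"
      then have "X = Y \<union> (X \<inter> B)" "X \<inter> B \<in> Pow B" by auto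
      then show "X \<in> (\<lambda>C. Y \<union> C) ` Pow B" by blast
    qed
  qed
  have inj: "inj_on (\<lambda>C. Y \<union> C) (Pow B)"
    using YB by (auto simp: inj_on_def)
  have RHS: "(\<Prod>X\<in>{X. finite X \<and> x \<in> X \<and> X - B = Y}.
              bigmax (cmod (W X))
                (\<lambda>S. 1 + cmod (W X - 1) * alphaS r S)
                {S. S \<noteq> {} \<and> S \<subseteq> X - ({x} \<union> B)}) = (\<Prod>C\<in>Pow B. M C)"
  proof -
    have "(\<Prod>X\<in>{X. finite X \<and> x \<in> X \<and> X - B = Y}.
              bigmax (cmod (W X))
                (\<lambda>S. 1 + cmod (W X - 1) * alphaS r S)
                {S. S \<noteq> {} \<and> S \<subseteq> X - ({x} \<union> B)})
       = (\<Prod>C\<in>Pow B. bigmax (cmod (W (Y \<union> C)))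
                (\<lambda>S. 1 + cmod (W (Y \<union> C) - 1) * alphaS r S)
                {S. S \<noteq> {} \<and> S \<subseteq> (Y \<union> C) - ({x} \<union> B)})"
      unfolding img[symmetric] by (rule prod.reindex[OF inj, unfolded comp_def])
    also have "\<dots> = (\<Prod>C\<in>Pow B. M C)"
    proof (rule prod.cong[OF refl])
      fix C assume "C \<in> Pow B"
      then have "(Y \<union> C) - ({x} \<union> B) = Y - {x}" using YB by auto
      then show "bigmax (cmod (W (Y \<union> C)))
                (\<lambda>S. 1 + cmod (W (Y \<union> C) - 1) * alphaS r S)
                {S. S \<noteq> {} \<and> S \<subseteq> (Y \<union> C) - ({x} \<union> B)} = M C"
        unfolding M_def SS_def by simp
    qed
    finally show ?thesis .
  qed
  have cW: "condW W Y B = (\<Prod>C\<in>Pow B. W (Y \<union> C))"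
    using YB by (simp add: condW_def)
  have M1: "cmod (W (Y \<union> C)) \<le> M C" for C
    unfolding M_def bigmax_def using SSfin by (intro Max_ge) auto
  have M2: "1 + cmod (W (Y \<union> C) - 1) * alphaS r S \<le> M C" if "S \<in> SS" for C S
    unfolding M_def bigmax_def using SSfin that by (intro Max_ge) auto
  have finB: "finite (Pow B)" using B_fin by simp
  have "Max (insert (cmod (\<Prod>C\<in>Pow B. W (Y \<union> C)))
       ((\<lambda>S. 1 + cmod ((\<Prod>C\<in>Pow B. W (Y \<union> C)) - 1) * alphaS r S) ` SS)) \<le> (\<Prod>C\<in>Pow B. M C)"
  proof (rule Max.boundedI)
    show "finite (insert (cmod (\<Prod>C\<in>Pow B. W (Y \<union> C)))
       ((\<lambda>S. 1 + cmod ((\<Prod>C\<in>Pow B. W (Y \<union> C)) - 1) * alphaS r S) ` SS))"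
      using SSfin by simp
    show "v \<le> (\<Prod>C\<in>Pow B. M C)" if "v \<in> insert (cmod (\<Prod>C\<in>Pow B. W (Y \<union> C)))
       ((\<lambda>S. 1 + cmod ((\<Prod>C\<in>Pow B. W (Y \<union> C)) - 1) * alphaS r S) ` SS)" for v
    proof -
      from that consider "v = cmod (\<Prod>C\<in>Pow B. W (Y \<union> C))"
        | S where "S \<in> SS" "v = 1 + cmod ((\<Prod>C\<in>Pow B. W (Y \<union> C)) - 1) * alphaS r S" by auto
      then show "v \<le> (\<Prod>C\<in>Pow B. M C)"
      proof cases
        case 1
        have "cmod (\<Prod>C\<in>Pow B. W (Y \<union> C)) = (\<Prod>C\<in>Pow B. cmod (W (Y \<union> C)))"
          by (simp add: prod_norm)
        also have "\<dots> \<le> (\<Prod>C\<in>Pow B. M C)"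
          by (rule prod_mono) (use M1 in auto)
        finally show ?thesis using 1 by simp
      next
        case 2
        show ?thesis using prod_bound[OF finB alphaS_nonneg[OF r_range, of S], of "\<lambda>C. W (Y \<union> C)" M]
          M1 M2[OF 2(1)] 2(2) by auto
      qed
    qed
  qed simp
  then show ?thesis apply (subst RHS) unfolding SS_def[symmetric] bigmax_def cW .
qed

end
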